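(* Assume the univalence axiom. Let $A\xrightarrow{i}E\xrightarrow{p}B$ be a short exact sequence of abelian groups, $G$ an abelian group, and $G\to F\to E$ a short exact sequence. Suppose given path data $i^*(F)=\mathrm{pt}$, i.e. an isomorphism $\psi: G\oplus A\cong i^*(F)$ between the middle groups respecting the inclusions of $G$ and the projections to $A$. Let $F/A$ denote the cokernel of the composite $A\to G\oplus A\xrightarrow{\psi} i^*(F)\to F$. Then the composite $G\to F\to F/A$ and the map $F/A\to B$ induced (by the universal property of the cokernel) from $F\to E\xrightarrow{p}B$ form a short exact sequence $G\to F/A\to B$.
   Context: Short exact sequence $X\xrightarrow{j}M\xrightarrow{q}Y$: $j$ injective, $q$ surjective, $q\circ j=0$, and $X\to\ker q$ surjective. For $g:Y'\to Y$, the pullback $g^*(M)$ is the short exact sequence $X\to M\times_Y Y'\to Y'$ with middle group $\{(m,y')\mid q(m)=g(y')\}$; in particular $i^*(F)$ is the sequence $G\to F\times_E A\to A$. The trivial sequence $\mathrm{pt}$ from $G$ to $A$ is $G\to G\oplus A\to A$. *)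

theory Defs
  imports "HOL-Algebra.Algebra"
begin

definition ses :: "'x monoid \<Rightarrow> 'm monoid \<Rightarrow> 'y monoid \<Rightarrow> ('x \<Rightarrow> 'm) \<Rightarrow> ('m \<Rightarrow> 'y) \<Rightarrow> bool" where
  "ses K M Y j q \<longleftrightarrow>
     comm_group K \<and> comm_group M \<and> comm_group Y \<and>
     j \<in> hom K M \<and> q \<in> hom M Y \<and>
     inj_on j (carrier K) \<and> q ` carrier M = carrier Y \<and>
     (\<forall>x \<in> carrier K. q (j x) = one Y) \<and>
     kernel M Y q \<subseteq> j ` carrier K"

text \<open>Middle group of the pullback g^*(M) of q : M \<rightarrow> Y along g : Y' \<rightarrow> Y:
  the subgroup {(m,y'). q m = g y'} of M \<times> Y'.\<close>

definition pullback_grp :: "'m monoid \<Rightarrow> 'z monoid \<Rightarrow> ('m \<Rightarrow> 'y) \<Rightarrow> ('z \<Rightarrow> 'y) \<Rightarrow> ('m \<times> 'z) monoid" where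
  "pullback_grp M Y' q g =
     (M \<times>\<times> Y') \<lparr>carrier := {(m, y'). m \<in> carrier M \<and> y' \<in> carrier Y' \<and> q m = g y'}\<rparr>"

end

theory Submission
  imports Defs
begin

theorem lemma14:
  fixes A :: "'a monoid" and E :: "'e monoid" and B :: "'b monoid"
    and G :: "'g monoid" and F :: "'f monoid"
    and i :: "'a \<Rightarrow> 'e" and p :: "'e \<Rightarrow> 'b"
    and jF :: "'g \<Rightarrow> 'f" and qF :: "'f \<Rightarrow> 'e"
    and \<psi> :: "'g \<times> 'a \<Rightarrow> 'f \<times> 'a"
  assumes sesE: "ses A E B i p"
    and sesF: "ses G F E jF qF"
    and psi_iso: "\<psi> \<in> iso (G \<times>\<times> A) (pullback_grp F A qF i)"
    and psi_incl: "\<forall>g \<in> carrier G. \<psi> (g, one A) = (jF g, one A)"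
    and psi_proj: "\<forall>g \<in> carrier G. \<forall>a \<in> carrier A. snd (\<psi> (g, a)) = a"
  shows "let H = (\<lambda>a. fst (\<psi> (one G, a))) ` carrier A in
           (\<exists>\<phi>. \<phi> \<in> hom (F Mod H) B \<and> (\<forall>x \<in> carrier F. \<phi> (r_coset F H x) = p (qF x)))
         \<and> (\<forall>\<phi>. \<phi> \<in> hom (F Mod H) B \<and> (\<forall>x \<in> carrier F. \<phi> (r_coset F H x) = p (qF x))
               \<longrightarrow> ses G (F Mod H) B (\<lambda>g. r_coset F H (jF g)) \<phi>)"
proof -
  define h where "h = (\<lambda>a. fst (\<psi> (one G, a)))"
  define H where "H = h ` carrier A"
  interpret A: comm_group A using sesE unfolding ses_def by blast
  interpret E: comm_group E using sesE unfolding ses_def by blast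
  interpret B: comm_group B using sesE unfolding ses_def by blast
  interpret G: comm_group G using sesF unfolding ses_def by blast
  interpret F: comm_group F using sesF unfolding ses_def by blast
  have iA: "i \<in> hom A E" and pE: "p \<in> hom E B" and iinj: "inj_on i (carrier A)"
    and psurj: "p ` carrier E = carrier B" and pker: "kernel E B p \<subseteq> i ` carrier A"
    using sesE unfolding ses_def by auto
  have jG: "jF \<in> hom G F" and qFh: "qF \<in> hom F E" and jinj: "inj_on jF (carrier G)"
    and qsurj: "qF ` carrier F = carrier E" and qj: "\<forall>x \<in> carrier G. qF (jF x) = one E"
    and qker: "kernel F E qF \<subseteq> jF ` carrier G"
    using sesF unfolding ses_def by auto
  interpret iAE: group_hom A E i by (simp add: group_hom_def group_hom_axioms_def iA A.is_group E.is_group)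
  interpret pEB: group_hom E B p by (simp add: group_hom_def group_hom_axioms_def pE B.is_group E.is_group)
  interpret jGF: group_hom G F jF by (simp add: group_hom_def group_hom_axioms_def jG F.is_group G.is_group)
  interpret qFE: group_hom F E qF by (simp add: group_hom_def group_hom_axioms_def qFh F.is_group E.is_group)
  have psihom: "\<psi> \<in> hom (G \<times>\<times> A) (pullback_grp F A qF i)" using psi_iso by (simp add: iso_def)
  have hA: "h a \<in> carrier F \<and> qF (h a) = i a" if "a \<in> carrier A" for a
  proof -
    have "\<psi> (one G, a) \<in> carrier (pullback_grp F A qF i)"
      using psihom that by (auto simp: hom_def Pi_def)
    moreover have "snd (\<psi> (one G, a)) = a" using psi_proj that by auto
    ultimately show ?thesis unfolding h_def pullback_grp_def by (cases "\<psi> (one G, a)") auto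
  qed
  have hmult: "h (a \<otimes>\<^bsub>A\<^esub> b) = h a \<otimes>\<^bsub>F\<^esub> h b" if "a \<in> carrier A" "b \<in> carrier A" for a b
  proof -
    have "\<psi> (one G \<otimes>\<^bsub>G\<^esub> one G, a \<otimes>\<^bsub>A\<^esub> b) = \<psi> (one G, a) \<otimes>\<^bsub>pullback_grp F A qF i\<^esub> \<psi> (one G, b)"
    proof -
      have "\<forall>x\<in>carrier (G \<times>\<times> A). \<forall>y\<in>carrier (G \<times>\<times> A). \<psi> (x \<otimes>\<^bsub>G \<times>\<times> A\<^esub> y) = \<psi> x \<otimes>\<^bsub>pullback_grp F A qF i\<^esub> \<psi> y"
        using psihom unfolding hom_def by blast
      then have "\<forall>x\<in>carrier G. \<forall>y\<in>carrier A. \<forall>xa\<in>carrier G. \<forall>ya\<in>carrier A.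
           \<psi> (x \<otimes>\<^bsub>G\<^esub> xa, y \<otimes>\<^bsub>A\<^esub> ya) = \<psi> (x, y) \<otimes>\<^bsub>pullback_grp F A qF i\<^esub> \<psi> (xa, ya)"
        by simp
      then have "\<psi> (one G \<otimes>\<^bsub>G\<^esub> one G, a \<otimes>\<^bsub>A\<^esub> b) = \<psi> (one G, a) \<otimes>\<^bsub>pullback_grp F A qF i\<^esub> \<psi> (one G, b)"
        using that G.one_closed by blast
      then show ?thesis by simp
    qed
    then show ?thesis using that unfolding h_def pullback_grp_def
      by (auto simp: DirProd_def split: prod.splits)
  qed
  have hhom: "h \<in> hom A F" using hA hmult by (auto intro!: homI)
  interpret hAF: group_hom A F h by (simp add: group_hom_def group_hom_axioms_def hhom A.is_group F.is_group)
  have Hsub: "subgroup H F" unfolding H_def by (rule hAF.img_is_subgroup)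
  have Hnorm: "H \<lhd> F" using Hsub F.subgroup_imp_normal by blast
  interpret N: normal H F by (rule Hnorm)
  have Hsub': "H \<subseteq> carrier F" using Hsub subgroup.subset by blast
  have pq: "(\<lambda>x. p (qF x)) \<in> hom F B" using hom_compose[OF qFh pE] by (simp add: comp_def)
  have key: "p (qF x) = p (qF y)" if "x \<in> carrier F" "y \<in> carrier F" "r_coset F H x = r_coset F H y" for x y
  proof -
    have "x \<in> H #>\<^bsub>F\<^esub> y" using that F.rcos_self Hsub by metis
    then have "x \<otimes>\<^bsub>F\<^esub> inv\<^bsub>F\<^esub> y \<in> H" using subgroup.rcos_module_imp[OF Hsub F.is_group that(2)] by blast
    then obtain a where a: "a \<in> carrier A" "x \<otimes>\<^bsub>F\<^esub> inv\<^bsub>F\<^esub> y = h a" unfolding H_def by auto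
    then have "x = h a \<otimes>\<^bsub>F\<^esub> y" using that hA by (metis F.inv_solve_right)
    then have "p (qF x) = p (i a) \<otimes>\<^bsub>B\<^esub> p (qF y)" using a hA that by simp
    also have "p (i a) = one B"
      using a(1) pker sesE unfolding ses_def by auto
    finally show ?thesis using that by simp
  qed
  have part1: "\<exists>\<phi>. \<phi> \<in> hom (F Mod H) B \<and> (\<forall>x \<in> carrier F. \<phi> (r_coset F H x) = p (qF x))"
    using FactGroup_universal[OF pq Hnorm key] by metis
  have part2: "ses G (F Mod H) B (\<lambda>g. r_coset F H (jF g)) \<phi>"
    if phom: "\<phi> \<in> hom (F Mod H) B" and phx: "\<forall>x \<in> carrier F. \<phi> (r_coset F H x) = p (qF x)" for \<phi>
  proof -
    have cg: "comm_group (F Mod H)" using F.abelian_FactGroup[OF Hsub] .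
    have jh: "(\<lambda>g. r_coset F H (jF g)) \<in> hom G (F Mod H)"
      using hom_compose[OF jG N.r_coset_hom_Mod] by (simp add: comp_def)
    have inj: "inj_on (\<lambda>g. r_coset F H (jF g)) (carrier G)"
    proof (rule inj_onI)
      fix g g' assume g: "g \<in> carrier G" "g' \<in> carrier G" and eq: "r_coset F H (jF g) = r_coset F H (jF g')"
      have "jF g \<in> H #>\<^bsub>F\<^esub> jF g'" using F.rcos_self[OF jGF.hom_closed[OF g(1)] Hsub] eq by (simp only:)
      then have "jF g \<otimes>\<^bsub>F\<^esub> inv\<^bsub>F\<^esub> jF g' \<in> H"
        by (rule subgroup.rcos_module_imp[OF Hsub F.is_group jGF.hom_closed[OF g(2)]])
      moreover have "jF g \<otimes>\<^bsub>F\<^esub> inv\<^bsub>F\<^esub> jF g' = jF (g \<otimes>\<^bsub>G\<^esub> inv\<^bsub>G\<^esub> g')"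
        using g by (simp add: jGF.hom_mult jGF.hom_inv)
      ultimately have "jF (g \<otimes>\<^bsub>G\<^esub> inv\<^bsub>G\<^esub> g') \<in> h ` carrier A" unfolding H_def by (simp only:)
      then obtain a where a: "a \<in> carrier A" "jF (g \<otimes>\<^bsub>G\<^esub> inv\<^bsub>G\<^esub> g') = h a" by blast
      have "i a = qF (jF (g \<otimes>\<^bsub>G\<^esub> inv\<^bsub>G\<^esub> g'))" using a(2) hA[OF a(1)] by (simp only:)
      also have "\<dots> = one E" using qj G.m_closed[OF g(1) G.inv_closed[OF g(2)]] by blast
      finally have "a = one A" using iinj a(1) by (metis A.one_closed iAE.hom_one inj_onD)
      then have "jF (g \<otimes>\<^bsub>G\<^esub> inv\<^bsub>G\<^esub> g') = jF (one G)" using a(2) hAF.hom_one jGF.hom_one by (simp only:)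
      then have "g \<otimes>\<^bsub>G\<^esub> inv\<^bsub>G\<^esub> g' = one G" by (rule inj_onD[OF jinj _ G.m_closed[OF g(1) G.inv_closed[OF g(2)]] G.one_closed])
      then show "g = g'" by (metis G.inv_solve_right[OF G.one_closed g(1) g(2)] G.l_one[OF g(2)])
    qed
    have "\<phi> ` carrier (F Mod H) = \<phi> ` (r_coset F H ` carrier F)" by (simp add: carrier_FactGroup)
    also have "\<dots> = (\<lambda>x. p (qF x)) ` carrier F" unfolding image_image using phx by (intro image_cong) auto 
    also have "\<dots> = p ` (qF ` carrier F)" by (simp add: image_image)
    finally have surj: "\<phi> ` carrier (F Mod H) = carrier B" using qsurj psurj by simp
    have triv: "\<forall>g \<in> carrier G. \<phi> (r_coset F H (jF g)) = one B" using phx qj by simp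
    have ker: "kernel (F Mod H) B \<phi> \<subseteq> (\<lambda>g. r_coset F H (jF g)) ` carrier G"
    proof
      fix C assume "C \<in> kernel (F Mod H) B \<phi>"
      then obtain x where x: "x \<in> carrier F" "C = r_coset F H x" "p (qF x) = one B"
        unfolding kernel_def carrier_FactGroup using phx by auto
      then have "qF x \<in> kernel E B p" unfolding kernel_def by simp
      then obtain a where a: "a \<in> carrier A" "qF x = i a" using pker by auto
      define y where "y = x \<otimes>\<^bsub>F\<^esub> inv\<^bsub>F\<^esub> h a"
      have y: "y \<in> carrier F" unfolding y_def using x a hA by simp
      have "qF y = one E" unfolding y_def using x a hA by simp
      then have "y \<in> kernel F E qF" using y unfolding kernel_def by simp
      then obtain g where g: "g \<in> carrier G" "y = jF g" using qker by auto
      have haF: "h a \<in> carrier F" using hA a(1) by blast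
      have "jF g \<otimes>\<^bsub>F\<^esub> inv\<^bsub>F\<^esub> x = (x \<otimes>\<^bsub>F\<^esub> inv\<^bsub>F\<^esub> h a) \<otimes>\<^bsub>F\<^esub> inv\<^bsub>F\<^esub> x"
        using g(2) y_def by (simp only:)
      also have "\<dots> = (inv\<^bsub>F\<^esub> h a \<otimes>\<^bsub>F\<^esub> x) \<otimes>\<^bsub>F\<^esub> inv\<^bsub>F\<^esub> x"
        using F.m_comm[OF x(1) F.inv_closed[OF haF]] by (simp only:)
      also have "\<dots> = inv\<^bsub>F\<^esub> h a"
        using F.m_assoc[OF F.inv_closed[OF haF] x(1) F.inv_closed[OF x(1)]] F.r_inv[OF x(1)] F.r_one[OF F.inv_closed[OF haF]]
        by (simp only:)
      finally have "jF g \<otimes>\<^bsub>F\<^esub> inv\<^bsub>F\<^esub> x = inv\<^bsub>F\<^esub> h a" .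
      moreover have "inv\<^bsub>F\<^esub> h a \<in> H"
      proof -
        have "inv\<^bsub>F\<^esub> h a = h (inv\<^bsub>A\<^esub> a)" using a(1) by simp
        moreover have "h (inv\<^bsub>A\<^esub> a) \<in> H" unfolding H_def using a(1) by blast
        ultimately show ?thesis by (simp only:)
      qed
      ultimately have inH: "jF g \<otimes>\<^bsub>F\<^esub> inv\<^bsub>F\<^esub> x \<in> H" by simp
      have "jF g \<in> carrier F" using g(1) by simp
      then have jx: "jF g \<in> H #>\<^bsub>F\<^esub> x"
        using subgroup.rcos_module_rev[OF Hsub F.is_group x(1)] inH by blast
      have "C = r_coset F H (jF g)" using F.repr_independence[OF jx x(1) Hsub] x(2) by (simp only:)
      then show "C \<in> (\<lambda>g. r_coset F H (jF g)) ` carrier G" using g by blast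
    qed
    show ?thesis unfolding ses_def
      using G.comm_group_axioms cg B.comm_group_axioms jh phom inj surj triv ker by (intro conjI)
  qed
  show ?thesis unfolding Let_def using part1 part2 unfolding H_def h_def by blast
qed

end
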